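(* For $m\in\mathbb{N}$ let \[ x_m=(-1)^{m-1}\sum_{\ell=0}^{m}(-1)^{\ell-1}S(m,\ell)(2\ell-3)!!, \] so that $(x_1,x_2,x_3,x_4,x_5,x_6,\dots)=(1,0,1,3,16,105,\dots)$. For integers $n\ge k\ge0$ let $P(n,k)=k!\,[2(n-k)-1]!!\binom{2n-k-1}{2(n-k)}$. Then for all integers $n\ge k\ge 0$, \[ B_{n,k}(x_1,x_2,\dots,x_{n-k+1})=\frac{(-1)^n}{k!}\sum_{\ell=k}^{n}(-1)^{\ell}S(n,\ell)P(\ell,k). \]
   Context: $S(n,\ell)$ are the Stirling numbers of the second kind, given by $\frac{(e^x-1)^\ell}{\ell!}=\sum_{n\ge \ell}S(n,\ell)\frac{x^n}{n!}$. The Bell polynomials of the second kind are \[ B_{n,k}(x_1,\dots,x_{n-k+1})=\sum\frac{n!}{\prod_{i}\ell_i!}\prod_{i=1}^{n-k+1}\Big(\frac{x_i}{i!}\Big)^{\ell_i}, \] where the sum is over nonnegative integers $\ell_1,\dots,\ell_{n-k+1}$ with $\sum i\ell_i=n$ and $\sum\ell_i=k$. Double factorials: $(2j-1)!!=1\cdot3\cdots(2j-1)$ for $j\ge1$, and $[-(2j+1)]!!=(-1)^j/(2j-1)!!$ for $j\ge0$, so $(-1)!!=1$ and $(-3)!!=-1$. The binomial $\binom{2n-k-1}{2(n-k)}$ equals $1$ when $n=k$. *)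

theory Defs
  imports "HOL-Analysis.Analysis" "HOL-Combinatorics.Stirling"
begin

text \<open>odd_dfact j = (2j-1)!! for any integer j, with the convention
  [-(2i+1)]!! = (-1)^i / (2i-1)!! for i >= 0 and (-1)!! = 1.\<close>
definition odd_dfact :: "int \<Rightarrow> real" where
  "odd_dfact j = (if j \<ge> 0 then (\<Prod>i=1..nat j. real (2*i - 1))
                 else (-1) ^ nat (-j) / (\<Prod>i=1..nat (-j). real (2*i - 1)))"

definition xseq :: "nat \<Rightarrow> real" where
  "xseq m = (-1) ^ (m + 1) *
     (\<Sum>l=0..m. (-1) ^ (l + 1) * real (Stirling m l) * odd_dfact (int l - 1))"

definition Pnk :: "nat \<Rightarrow> nat \<Rightarrow> real" where
  "Pnk n k = fact k * odd_dfact (int n - int k) * real ((2*n - k - 1) choose (2*(n - k)))"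

definition bell_poly2 :: "nat \<Rightarrow> nat \<Rightarrow> (nat \<Rightarrow> real) \<Rightarrow> real" where
  "bell_poly2 n k x =
     (\<Sum>l \<in> {l \<in> {1..n-k+1} \<rightarrow>\<^sub>E {0..n}.
              (\<Sum>i=1..n-k+1. i * l i) = n \<and> (\<Sum>i=1..n-k+1. l i) = k}.
        fact n / (\<Prod>i=1..n-k+1. fact (l i)) * (\<Prod>i=1..n-k+1. (x i / fact i) ^ l i))"

end

theory Submission imports Defs "HOL-Computational_Algebra.Formal_Power_Series"
begin

definition Hs :: "real fps" where "Hs = Abs_fps (\<lambda>l. ((1/2) gchoose l) * (-2)^l)"
definition Gs :: "real fps" where "Gs = 1 - Hs"

lemma Hs_sq: "Hs^2 = 1 - 2 * fps_X"
proof (rule fps_ext)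
  fix n
  have "fps_nth (Hs^2) n = (\<Sum>i=0..n. ((1/2) gchoose i) * ((1/2) gchoose (n-i))) * (-2)^n"
    unfolding power2_eq_square fps_mult_nth Hs_def sum_distrib_right
    by (rule sum.cong) (auto simp: power_add[symmetric])
  also have "\<dots> = (1 gchoose n) * (-2)^n"
    by (subst gbinomial_Vandermonde) simp
  also have "\<dots> = fps_nth (1 - 2 * fps_X :: real fps) n"
  proof -
    consider "n = 0" | "n = 1" | "n \<ge> 2" by linarith
    then show ?thesis
    proof cases
      case 3
      have "(1::real) gchoose n = of_nat (1 choose n)" by (metis binomial_gbinomial of_nat_1)
      then show ?thesis using 3 by (simp add: fps_numeral_nth)
    qed auto
  qed
  finally show "fps_nth (Hs^2) n = fps_nth (1 - 2 * fps_X :: real fps) n" .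
qed

lemma Gs_sq: "Gs^2 = 2 * Gs - 2 * fps_X"
  using Hs_sq unfolding Gs_def power2_eq_square by (simp add: algebra_simps)

lemma Gs_0: "fps_nth Gs 0 = 0"
  by (simp add: Gs_def Hs_def)

lemma aux_Hs: fixes F f P x :: real assumes "F > 0" "f > 0" "P > 0" "x \<ge> 0"
  shows "-(F/(P*f*((x+1)*f))) * (1/2 - (x+1)) * (-2) / (x+2) = -((2 * x+2)*(2 * x+1)*F) / (2*P * ((x+1)*f) * ((x+2)*((x+1)*f)))"
proof -
  have "x+1 \<noteq> 0" "x+2 \<noteq> 0" using assms by linarith+
  then show ?thesis using assms by (simp add: divide_simps) (simp add: algebra_simps)
qed

lemma Hs_Suc: "fps_nth Hs (Suc m) = - fact (2*m) / (2^m * fact m * fact (Suc m))"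
proof (induction m)
  case 0
  then show ?case by (simp add: Hs_def)
next
  case (Suc m)
  have "((1/2::real) gchoose Suc (Suc m)) = ((1/2) gchoose (Suc m)) * (1/2 - of_nat (Suc m)) / of_nat (Suc (Suc m))"
    using gbinomial_mult_1[of "1/2::real" "Suc m"] by (simp add: field_simps)
  then have "fps_nth Hs (Suc (Suc m)) = fps_nth Hs (Suc m) * (1/2 - of_nat (Suc m)) * (-2) / of_nat (Suc (Suc m))"
    by (simp add: Hs_def)
  also have "\<dots> = - fact (2*Suc m) / (2^Suc m * fact (Suc m) * fact (Suc (Suc m)))"
  proof -
    have e1: "fact (2*Suc m) = (2 * of_nat m+2)*(2 * of_nat m+1)*(fact (2*m)::real)"
      by (simp add: fact_Suc algebra_simps)
    have e2: "fact (Suc (Suc m)) = (of_nat m + 2) * (fact (Suc m)::real)"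
      by (simp add: algebra_simps)
    have e3: "fact (Suc m) = (of_nat m+1) * (fact m::real)" by simp
    have p: "(0::real) < of_nat m + 2" "(0::real) < of_nat m + 1" by linarith+
    show ?thesis unfolding Suc.IH e1 e2 e3 using aux_Hs[of "fact (2*m)" "fact m" "2^m" "real m"]
      by (simp add: mult.assoc add.commute)
  qed
  finally show ?case .
qed

definition gf :: "nat \<Rightarrow> nat \<Rightarrow> real" where
  "gf k j = (if k = 0 then (if j = 0 then 1 else 0)
             else of_nat k * fact (k + 2*j - 1) / (2^j * fact j * fact (k+j)))"

lemma gf_Suc: "gf k (Suc j) = of_nat k * fact (k + 2*j + 1) / (2^Suc j * fact (Suc j) * fact (k + j + 1))"
  by (simp add: gf_def)

lemma aux_gf: fixes M a b P K J :: real assumes "M > 0" "a > 0" "b > 0" "P > 0" "K \<ge> 0" "J \<ge> 0"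
  shows "(K+2)*M/(P*a*((K+J+2)*b)) = 2*((K+1)*((K+2*J+2)*M)/(2*P*((J+1)*a)*((K+J+2)*b))) - 2*(K*M/(2*P*((J+1)*a)*b))"
proof -
  have "K+J+2 \<noteq> 0" "J+1 \<noteq> 0" using assms by linarith+
  then show ?thesis using assms by (simp add: divide_simps) (simp add: algebra_simps)
qed

lemma gf_rec: "gf (k+2) j = 2 * gf (k+1) (j+1) - 2 * gf k (j+1)"
proof -
  have e1: "gf (k+2) j = (real k + 2) * fact (k+2*j+1) / (2^j * fact j * ((real k + real j + 2) * fact (k+j+1)))"
    by (simp add: gf_def algebra_simps)
  have e2: "gf (k+1) (j+1) = (real k + 1) * ((real k + 2 * real j + 2) * fact (k+2*j+1)) / (2 * 2^j * ((real j + 1) * fact j) * ((real k + real j + 2) * fact (k+j+1)))"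
  proof -
    have f1: "fact (k + 1 + 2 * j + 1) = (real k + 2 * real j + 2) * (fact (k+2*j+1) :: real)"
      using fact_Suc[of "k+2*j+1"] by (simp add: algebra_simps)
    have f2: "fact (k + 1 + j + 1) = (real k + real j + 2) * (fact (k+j+1) :: real)"
      using fact_Suc[of "k+j+1"] by (simp add: algebra_simps)
    have f3: "fact (Suc j) = (real j + 1) * (fact j :: real)" by simp
    show ?thesis unfolding Suc_eq_plus1[symmetric] gf_Suc f1 f2 f3 by (simp add: ac_simps)
  qed
  have e3: "gf k (j+1) = real k * fact (k+2*j+1) / (2 * 2^j * ((real j + 1) * fact j) * fact (k+j+1))"
    unfolding Suc_eq_plus1[symmetric] gf_Suc by (simp add: algebra_simps)
  show ?thesis unfolding e1 e2 e3
    by (rule aux_gf) auto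
qed

lemma Gs_pow_low: "l < k \<Longrightarrow> fps_nth (Gs^k) l = 0"
proof (induction k arbitrary: l)
  case 0 then show ?case by simp
next
  case (Suc k)
  have "fps_nth (Gs^Suc k) l = (\<Sum>i=0..l. fps_nth Gs i * fps_nth (Gs^k) (l - i))"
    by (simp add: fps_mult_nth)
  also have "\<dots> = 0"
  proof (rule sum.neutral, intro ballI)
    fix i assume "i \<in> {0..l}"
    show "fps_nth Gs i * fps_nth (Gs^k) (l - i) = 0"
    proof (cases "i = 0")
      case True then show ?thesis by (simp add: Gs_0)
    next
      case False then have "l - i < k" using Suc.prems \<open>i \<in> {0..l}\<close> by auto
      then show ?thesis using Suc.IH by simp
    qed
  qed
  finally show ?case .
qed

lemma Gs_rec: "Gs^(Suc (Suc k)) = 2 * Gs^(Suc k) - 2 * (fps_X * Gs^k)"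
proof -
  have "Gs^(Suc (Suc k)) = Gs^k * Gs^2" by (simp add: power_add[symmetric])
  also have "\<dots> = 2 * Gs^(Suc k) - 2 * (fps_X * Gs^k)" unfolding Gs_sq by (simp add: algebra_simps)
  finally show ?thesis .
qed

lemma Gs_1: "fps_nth Gs (1 + j) = gf 1 j"
  by (simp add: Gs_def Hs_Suc gf_def)

lemma Gs_pow: "fps_nth (Gs^k) (k+j) = gf k j"
proof -
  have "(\<forall>j. fps_nth (Gs^k) (k+j) = gf k j) \<and> (\<forall>j. fps_nth (Gs^Suc k) (Suc k+j) = gf (Suc k) j)"
  proof (induction k)
    case 0
    then show ?case using Gs_1 by (simp add: gf_def)
  next
    case (Suc k)
    have "fps_nth (Gs^Suc (Suc k)) (Suc (Suc k) + j) = gf (Suc (Suc k)) j" for j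
    proof -
      have "fps_nth (Gs^Suc (Suc k)) (Suc (Suc k) + j) =
         2 * fps_nth (Gs^Suc k) (Suc k + (j+1)) - 2 * fps_nth (Gs^k) (k + (j+1))"
        unfolding Gs_rec by (simp add: fps_X_mult_nth)
      also have "\<dots> = gf (Suc (Suc k)) j"
      proof -
        have a: "fps_nth (Gs^Suc k) (Suc k + (j+1)) = gf (Suc k) (j+1)" using Suc.IH by blast
        have b: "fps_nth (Gs^k) (k + (j+1)) = gf k (j+1)" using Suc.IH by blast
        show ?thesis unfolding a b using gf_rec[of k j] by (simp add: numeral_2_eq_2)
      qed
      finally show ?thesis .
    qed
    then show ?case using Suc.IH by simp
  qed
  then show ?thesis by blast
qed

definition Ws :: "real fps" where "Ws = Abs_fps (\<lambda>n. if n = 0 then 0 else (-1)^(n+1) / fact n)"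

lemma Ws_0: "fps_nth Ws 0 = 0" by (simp add: Ws_def)

lemma Ws_deriv: "fps_deriv Ws = 1 - Ws"
proof (rule fps_ext)
  fix n
  show "fps_nth (fps_deriv Ws) n = fps_nth (1 - Ws) n"
  proof -
    have a: "fps_nth (fps_deriv Ws) n = (-1)^n / fact n"
    proof -
      have "fps_nth (fps_deriv Ws) n = of_nat (Suc n) * ((-1)^(n+2) / (of_nat (Suc n) * fact n))"
        by (simp add: Ws_def del: of_nat_Suc)
      also have "\<dots> = (-1)^n / fact n" by (simp del: of_nat_Suc)
      finally show ?thesis .
    qed
    show ?thesis unfolding a by (cases n) (simp_all add: Ws_def)
  qed
qed

lemma Stirling_0_right: "Stirling n 0 = (if n = 0 then 1 else 0)"
  by (cases n) simp_all

lemma Ws_pow: "fps_nth (Ws^l) n = (-1)^(n+l) * fact l * real (Stirling n l) / fact n"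
proof (induction l arbitrary: n)
  case 0
  then show ?case by (simp add: Stirling_0_right)
next
  case (Suc l)
  note IHl = Suc.IH
  show ?case
  proof (induction n)
    case 0
    then show ?case by (simp add: fps_mult_nth Ws_0)
  next
    case (Suc n)
    have d: "fps_deriv (Ws^Suc l) = fps_const (of_nat (Suc l)) * (Ws^l - Ws^Suc l)"
      unfolding fps_deriv_power Ws_deriv by (simp add: algebra_simps)
    have d1: "fps_nth (fps_deriv (Ws^Suc l)) n = fps_nth (fps_const (of_nat (Suc l)) * (Ws^l - Ws^Suc l)) n"
      by (simp only: d)
    have "of_nat (n+1) * fps_nth (Ws^Suc l) (Suc n) = of_nat (Suc l) * (fps_nth (Ws^l) n - fps_nth (Ws^Suc l) n)"
      using d1 by (simp only: fps_deriv_nth Suc_eq_plus1 fps_mult_left_const_nth fps_sub_nth)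
    then have "fps_nth (Ws^Suc l) (Suc n) = of_nat (Suc l) * (fps_nth (Ws^l) n - fps_nth (Ws^Suc l) n) / of_nat (n+1)"
      by (simp add: field_simps)
    also have "\<dots> = of_nat (Suc l) * ((-1)^(n+l) * fact l * real (Stirling n l) / fact n - (-1)^(n+Suc l) * fact (Suc l) * real (Stirling n (Suc l)) / fact n) / of_nat (n+1)"
      using IHl[of n] Suc.IH by simp
    also have "\<dots> = (-1)^(Suc n + Suc l) * fact (Suc l) * real (Stirling (Suc n) (Suc l)) / fact (Suc n)"
      by (simp add: fact_Suc field_simps)
    finally show ?case .
  qed
qed

lemma odd_dfact_nat: "odd_dfact (int j) = fact (2*j) / (2^j * fact j)"
proof (induction j)
  case 0 then show ?case by (simp add: odd_dfact_def)
next
  case (Suc j)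
  have p: "(\<Prod>i=1..Suc j. real (2*i - 1)) = (\<Prod>i=1..j. real (2*i - 1)) * (2 * real j + 1)"
    by (simp add: prod.nat_ivl_Suc')
  have od: "odd_dfact (int m) = (\<Prod>i=1..m. real (2*i-1))" for m by (simp add: odd_dfact_def)
  have "odd_dfact (int (Suc j)) = odd_dfact (int j) * (2 * real j + 1)"
    unfolding od using p by simp
  also have "\<dots> = fact (2 * Suc j) / (2^Suc j * fact (Suc j))"
  proof -
    have e1: "fact (2*Suc j) = (2 * real j + 2) * (2 * real j + 1) * (fact (2*j)::real)"
      by (simp add: fact_Suc algebra_simps)
    have e2: "fact (Suc j) = (real j + 1) * (fact j :: real)" by simp
    have "F/(P*f) * (2*x+1) = ((2*x+2)*(2*x+1)*F)/(2*P*((x+1)*f))" if "P > 0" "f > 0" "x \<ge> 0" for F P f x :: real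
    proof -
      have "x + 1 \<noteq> 0" using that by linarith
      then show ?thesis using that by (simp add: divide_simps)
    qed
    from this[of "2^j" "fact j" "real j" "fact (2*j)"]
    show ?thesis unfolding Suc.IH e1 e2 by simp
  qed
  finally show ?case .
qed

lemma Pnk_gf: "Pnk (k+j) k / fact (k+j) = gf k j"
proof (cases k)
  case 0
  then show ?thesis
    by (cases j) (simp_all add: Pnk_def gf_def odd_dfact_def binomial_eq_0)
next
  case (Suc k')
  have c: "real ((2*(k+j) - k - 1) choose (2*(k+j-k))) = fact (k+2*j-1) / (fact (2*j) * fact k')"
    using binomial_fact[of "2*j" "k+2*j-1", where 'a=real] Suc
    by (simp add: algebra_simps)
  have "Pnk (k+j) k = fact k * (fact (2*j) / (2^j * fact j)) * (fact (k+2*j-1) / (fact (2*j) * fact k'))"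
    unfolding Pnk_def c using odd_dfact_nat[of j] by simp
  also have "\<dots> = real k * fact (k+2*j-1) / (2^j * fact j)"
    using Suc by (simp add: field_simps)
  finally show ?thesis using Suc by (simp add: gf_def)
qed

lemma Gs_nth: assumes "i \<ge> 1" shows "fps_nth Gs i = odd_dfact (int i - 1) / fact i"
proof -
  obtain j where i: "i = 1 + j" using assms by (metis le_Suc_ex)
  have "fps_nth Gs i = gf 1 j" using Gs_pow[of 1 j] i by simp
  also have "\<dots> = odd_dfact (int j) / fact i" unfolding odd_dfact_nat gf_def i by simp
  finally show ?thesis using i by simp
qed

definition Fx :: "real fps" where "Fx = Abs_fps (\<lambda>m. if m = 0 then 0 else xseq m / fact m)"

lemma Fx_comp: "Fx = Gs oo Ws"
proof (rule fps_ext)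
  fix m
  show "fps_nth Fx m = fps_nth (Gs oo Ws) m"
  proof (cases "m = 0")
    case True then show ?thesis by (simp add: Fx_def Gs_0)
  next
    case False
    have "fps_nth (Gs oo Ws) m = (\<Sum>l=0..m. fps_nth Gs l * fps_nth (Ws^l) m)"
      by (simp add: fps_compose_nth)
    also have "\<dots> = (\<Sum>l=0..m. (-1) ^ (m + 1) * ((-1) ^ (l + 1) * real (Stirling m l) * odd_dfact (int l - 1)) / fact m)"
    proof (rule sum.cong)
      fix l assume "l \<in> {0..m}"
      show "fps_nth Gs l * fps_nth (Ws^l) m = (-1) ^ (m + 1) * ((-1) ^ (l + 1) * real (Stirling m l) * odd_dfact (int l - 1)) / fact m"
      proof (cases "l = 0")
        case True then show ?thesis using False by (simp add: Gs_0 Stirling_0_right)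
      next
        case l: False
        have s: "(-1::real) ^ (m + 1) * (-1) ^ (l + 1) = (-1)^(m+l)"
          by (simp add: power_add)
        have g: "fps_nth Gs l = odd_dfact (int l - 1) / fact l" using l by (intro Gs_nth) simp
        show ?thesis unfolding g Ws_pow using l s
          by (simp add: field_simps)
      qed
    qed simp
    also have "\<dots> = fps_nth Fx m"
      using False by (simp add: Fx_def xseq_def sum_distrib_left sum_divide_distrib)
    finally show ?thesis by simp
  qed
qed


lemma fps_pow_low: "fps_nth (f::real fps) 0 = 0 \<Longrightarrow> l < k \<Longrightarrow> fps_nth (f^k) l = 0"
proof (induction k arbitrary: l)
  case 0 then show ?case by simp
next
  case (Suc k)
  have "fps_nth (f^Suc k) l = (\<Sum>i=0..l. fps_nth f i * fps_nth (f^k) (l - i))"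
    by (simp add: fps_mult_nth)
  also have "\<dots> = 0"
  proof (rule sum.neutral, intro ballI)
    fix i assume i: "i \<in> {0..l}"
    show "fps_nth f i * fps_nth (f^k) (l - i) = 0"
    proof (cases "i = 0")
      case True then show ?thesis using Suc.prems by simp
    next
      case False then have "l - i < k" using Suc.prems i by auto
      then show ?thesis using Suc.IH Suc.prems by simp
    qed
  qed
  finally show ?case .
qed

lemma fps_pow_trunc:
  fixes f g :: "real fps"
  assumes "fps_nth f 0 = 0" "fps_nth g 0 = 0" "\<And>i. i \<le> M \<Longrightarrow> fps_nth f i = fps_nth g i"
  shows "n < M + k \<Longrightarrow> fps_nth (f^k) n = fps_nth (g^k) n"
proof (induction k arbitrary: n)
  case 0 then show ?case by simp
next
  case (Suc k)
  have "fps_nth (f^Suc k) n = (\<Sum>i=0..n. fps_nth f i * fps_nth (f^k) (n - i))"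
    by (simp add: fps_mult_nth)
  also have "\<dots> = (\<Sum>i=0..n. fps_nth g i * fps_nth (g^k) (n - i))"
  proof (rule sum.cong)
    fix i assume i: "i \<in> {0..n}"
    show "fps_nth f i * fps_nth (f^k) (n - i) = fps_nth g i * fps_nth (g^k) (n - i)"
    proof (cases "i = 0")
      case True then show ?thesis using assms by simp
    next
      case False
      show ?thesis
      proof (cases "i \<le> M")
        case True
        have "n - i < M + k" using Suc.prems False i by auto
        then show ?thesis using True assms(3) Suc.IH by simp
      next
        case F: False
        have "n - i < k" using Suc.prems F i by auto
        then show ?thesis using fps_pow_low assms(1,2) by simp
      qed
    qed
  qed simp
  also have "\<dots> = fps_nth (g^Suc k) n"
    by (simp add: fps_mult_nth)
  finally show ?case .
qed

lemma multinomial_fps: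
  fixes a :: "'b \<Rightarrow> real fps"
  assumes "finite A"
  shows "k \<le> N \<Longrightarrow> (\<Sum>i\<in>A. a i)^k = (\<Sum>l \<in> A \<rightarrow>\<^sub>E {0..N}. if sum l A = k
            then fps_const (fact k / (\<Prod>i\<in>A. fact (l i))) * (\<Prod>i\<in>A. a i ^ l i) else 0)"
  using assms
proof (induction A arbitrary: k rule: finite_induct)
  case empty
  then show ?case by (simp add: PiE_empty_domain power_0_left)
next
  case (insert x A)
  let ?P = "A \<rightarrow>\<^sub>E {0..N}"
  let ?T = "\<lambda>k g. if sum g A = k then fps_const (fact k / (\<Prod>i\<in>A. fact (g i))) * (\<Prod>i\<in>A. a i ^ g i) else 0"
  have "(\<Sum>i\<in>insert x A. a i)^k = (a x + (\<Sum>i\<in>A. a i))^k" using insert by simp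
  also have "\<dots> = (\<Sum>j\<le>k. of_nat (k choose j) * a x ^ j * (\<Sum>i\<in>A. a i)^(k-j))"
    by (rule binomial_ring)
  also have "\<dots> = (\<Sum>j\<in>{0..k}. \<Sum>g\<in>?P. of_nat (k choose j) * a x ^ j * ?T (k-j) g)"
    using insert.IH insert.prems by (simp add: atLeast0AtMost sum_distrib_left)
  also have "\<dots> = (\<Sum>j\<in>{0..N}. \<Sum>g\<in>?P. if j + sum g A = k then
       fps_const (fact k / (fact j * (\<Prod>i\<in>A. fact (g i)))) * (a x ^ j * (\<Prod>i\<in>A. a i ^ g i)) else 0)"
  proof (rule sum.mono_neutral_cong_left)
    show "\<forall>j\<in>{0..N} - {0..k}. (\<Sum>g\<in>?P. if j + sum g A = k then
       fps_const (fact k / (fact j * (\<Prod>i\<in>A. fact (g i)))) * (a x ^ j * (\<Prod>i\<in>A. a i ^ g i)) else 0) = 0"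
      by auto
  next
    fix j assume j: "j \<in> {0..k}"
    show "(\<Sum>g\<in>?P. of_nat (k choose j) * a x ^ j * ?T (k-j) g) = (\<Sum>g\<in>?P. if j + sum g A = k then
       fps_const (fact k / (fact j * (\<Prod>i\<in>A. fact (g i)))) * (a x ^ j * (\<Prod>i\<in>A. a i ^ g i)) else 0)"
    proof (rule sum.cong)
      fix g assume "g \<in> ?P"
      have c: "(of_nat (k choose j) :: real fps) * fps_const (fact (k - j) / (\<Prod>i\<in>A. fact (g i))) =
          fps_const (fact k / (fact j * (\<Prod>i\<in>A. fact (g i))))"
      proof -
        have "real (k choose j) * (fact (k - j) / (\<Prod>i\<in>A. fact (g i))) = fact k / (fact j * (\<Prod>i\<in>A. fact (g i)))"
          using j by (simp add: binomial_fact field_simps)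
        then show ?thesis by (metis fps_const_mult fps_of_nat)
      qed
      show "of_nat (k choose j) * a x ^ j * ?T (k-j) g = (if j + sum g A = k then
       fps_const (fact k / (fact j * (\<Prod>i\<in>A. fact (g i)))) * (a x ^ j * (\<Prod>i\<in>A. a i ^ g i)) else 0)"
        using j c[symmetric] by (auto simp: algebra_simps)
    qed simp
  qed (use insert.prems in auto)
  also have "\<dots> = (\<Sum>(j,g)\<in>{0..N} \<times> ?P. if j + sum g A = k then
       fps_const (fact k / (fact j * (\<Prod>i\<in>A. fact (g i)))) * (a x ^ j * (\<Prod>i\<in>A. a i ^ g i)) else 0)"
    by (rule sum.cartesian_product)
  also have "\<dots> = (\<Sum>l \<in> insert x A \<rightarrow>\<^sub>E {0..N}. if sum l (insert x A) = k
            then fps_const (fact k / (\<Prod>i\<in>insert x A. fact (l i))) * (\<Prod>i\<in>insert x A. a i ^ l i) else 0)"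
  proof -
    have e: "insert x A \<rightarrow>\<^sub>E {0..N} = (\<lambda>(y, g). g(x := y)) ` ({0..N} \<times> ?P)"
      by (rule PiE_insert_eq)
    have inj: "inj_on (\<lambda>(y, g). g(x := y)) ({0..N} \<times> ?P)"
      using inj_combinator[OF insert.hyps(2), of "\<lambda>_. {0..N}"] by simp
    have eq: "(if sum (g(x:=j)) (insert x A) = k
            then fps_const (fact k / (\<Prod>i\<in>insert x A. fact ((g(x:=j)) i))) * (\<Prod>i\<in>insert x A. a i ^ (g(x:=j)) i) else 0)
        = (if j + sum g A = k then
       fps_const (fact k / (fact j * (\<Prod>i\<in>A. fact (g i)))) * (a x ^ j * (\<Prod>i\<in>A. a i ^ g i)) else 0)" for j g
    proof -
      have s: "sum (g(x:=j)) (insert x A) = j + sum g A"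
        using insert.hyps by (simp add: sum.insert, intro sum.cong) auto
      have p1: "(\<Prod>i\<in>insert x A. fact ((g(x:=j)) i)) = fact j * (\<Prod>i\<in>A. fact (g i) :: real)"
        using insert.hyps by (simp add: prod.insert, intro prod.cong) auto
      have p2: "(\<Prod>i\<in>insert x A. a i ^ (g(x:=j)) i) = a x ^ j * (\<Prod>i\<in>A. a i ^ g i)"
      proof -
        have "(\<Prod>i\<in>A. a i ^ (g(x:=j)) i) = (\<Prod>i\<in>A. a i ^ g i)"
          using insert.hyps by (intro prod.cong) auto
        then show ?thesis by (simp only: prod.insert[OF insert.hyps]) simp
      qed
      show ?thesis unfolding s p1 p2 ..
    qed
    show ?thesis unfolding e sum.reindex[OF inj] o_def
      apply (rule sum.cong[OF refl])
      apply clarify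
      apply (simp only: case_prod_conv eq)
      done
  qed
  finally show ?case .
qed

lemma fps_const_prod: "finite A \<Longrightarrow> (\<Prod>i\<in>A. fps_const (f i :: real)) = fps_const (\<Prod>i\<in>A. f i)"
  by (induction A rule: finite_induct) (simp_all add: fps_const_mult)

lemma prod_monom:
  assumes "finite A"
  shows "(\<Prod>i\<in>A. (fps_const (c i :: real) * fps_X^i)^(l i)) = fps_const (\<Prod>i\<in>A. c i ^ l i) * fps_X^(\<Sum>i\<in>A. i * l i)"
proof -
  have "(\<Prod>i\<in>A. (fps_const (c i :: real) * fps_X^i)^(l i)) = (\<Prod>i\<in>A. fps_const (c i ^ l i) * fps_X^(i * l i))"
    by (simp add: power_mult_distrib power_mult)
  also have "\<dots> = (\<Prod>i\<in>A. fps_const (c i ^ l i)) * (\<Prod>i\<in>A. fps_X^(i * l i))"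
    by (rule prod.distrib)
  also have "\<dots> = fps_const (\<Prod>i\<in>A. c i ^ l i) * fps_X^(\<Sum>i\<in>A. i * l i)"
    using assms by (simp add: fps_const_prod power_sum)
  finally show ?thesis .
qed

lemma bell_fps: assumes "k \<le> n"
  shows "bell_poly2 n k x = fact n / fact k * fps_nth ((Abs_fps (\<lambda>m. if m = 0 then 0 else x m / fact m))^k) n"
proof -
  define F where "F = Abs_fps (\<lambda>m. if m = 0 then 0 else x m / fact m)"
  define T where "T = (\<Sum>i\<in>{1..n-k+1}. fps_const (x i / fact i) * fps_X^i)"
  have T_nth: "fps_nth T m = (if 1 \<le> m \<and> m \<le> n-k+1 then x m / fact m else 0)" for m
    unfolding T_def fps_sum_nth by (simp add: if_distrib[of "\<lambda>y. _ * y"] sum.delta' cong: if_cong)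
  have "fps_nth (F^k) n = fps_nth (T^k) n"
    by (rule fps_pow_trunc[where M="n-k+1"]) (auto simp: F_def T_nth)
  also have "T^k = (\<Sum>l \<in> {1..n-k+1} \<rightarrow>\<^sub>E {0..n}. if sum l {1..n-k+1} = k
            then fps_const (fact k / (\<Prod>i\<in>{1..n-k+1}. fact (l i))) * (\<Prod>i\<in>{1..n-k+1}. (fps_const (x i / fact i) * fps_X^i) ^ l i) else 0)"
    unfolding T_def by (rule multinomial_fps) (use assms in auto)
  also have "fps_nth \<dots> n = (\<Sum>l \<in> {1..n-k+1} \<rightarrow>\<^sub>E {0..n}. if (\<Sum>i=1..n-k+1. i * l i) = n \<and> (\<Sum>i=1..n-k+1. l i) = k
            then fact k / (\<Prod>i=1..n-k+1. fact (l i)) * (\<Prod>i=1..n-k+1. (x i / fact i) ^ l i) else 0)"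
    unfolding fps_sum_nth prod_monom[OF finite_atLeastAtMost]
  proof (intro sum.cong refl)
    fix l :: "nat \<Rightarrow> nat"
    let ?A = "{1..n-k+1}"
    have "fps_const (fact k / (\<Prod>i\<in>?A. fact (l i))) * (fps_const (\<Prod>i\<in>?A. (x i / fact i) ^ l i) * fps_X ^ (\<Sum>i\<in>?A. i * l i))
       = fps_const (fact k / (\<Prod>i\<in>?A. fact (l i)) * (\<Prod>i\<in>?A. (x i / fact i) ^ l i)) * fps_X ^ (\<Sum>i\<in>?A. i * l i)"
      by (simp only: mult.assoc[symmetric] fps_const_mult)
    then show "fps_nth (if sum l ?A = k then fps_const (fact k / (\<Prod>i\<in>?A. fact (l i))) * (fps_const (\<Prod>i\<in>?A. (x i / fact i) ^ l i) * fps_X ^ (\<Sum>i\<in>?A. i * l i)) else 0) n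
      = (if (\<Sum>i=1..n-k+1. i * l i) = n \<and> (\<Sum>i=1..n-k+1. l i) = k
            then fact k / (\<Prod>i=1..n-k+1. fact (l i)) * (\<Prod>i=1..n-k+1. (x i / fact i) ^ l i) else 0)"
      by (simp only: fps_mult_left_const_nth fps_X_power_nth) auto
  qed
  finally have "fact n / fact k * fps_nth (F^k) n = (\<Sum>l \<in> {1..n-k+1} \<rightarrow>\<^sub>E {0..n}. if (\<Sum>i=1..n-k+1. i * l i) = n \<and> (\<Sum>i=1..n-k+1. l i) = k
            then fact n / (\<Prod>i=1..n-k+1. fact (l i)) * (\<Prod>i=1..n-k+1. (x i / fact i) ^ l i) else 0)"
    by (simp add: sum_distrib_left if_distrib[of "\<lambda>y. _ * y"] cong: if_cong)
  also have "\<dots> = bell_poly2 n k x"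
    unfolding bell_poly2_def by (rule sum.inter_filter[symmetric]) (simp add: finite_PiE)
  finally show ?thesis unfolding F_def ..
qed


theorem theorem3p4:
  fixes n k :: nat
  assumes "k \<le> n"
  shows "bell_poly2 n k xseq =
    (-1) ^ n / fact k * (\<Sum>l=k..n. (-1) ^ l * real (Stirling n l) * Pnk l k)"
proof -
  have "bell_poly2 n k xseq = fact n / fact k * fps_nth (Fx^k) n"
    using bell_fps[OF assms, of xseq] by (simp add: Fx_def)
  also have "Fx^k = Gs^k oo Ws" unfolding Fx_comp by (rule fps_compose_power) (simp add: Ws_0)
  also have "fps_nth (Gs^k oo Ws) n = (\<Sum>l=0..n. fps_nth (Gs^k) l * fps_nth (Ws^l) n)"
    by (simp add: fps_compose_nth)
  also have "\<dots> = (\<Sum>l=k..n. fps_nth (Gs^k) l * fps_nth (Ws^l) n)"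
    by (rule sum.mono_neutral_right) (auto simp: Gs_pow_low)
  also have "\<dots> = (\<Sum>l=k..n. Pnk l k / fact l * ((-1)^(n+l) * fact l * real (Stirling n l) / fact n))"
  proof (rule sum.cong)
    fix l assume "l \<in> {k..n}"
    then obtain j where l: "l = k + j" by (metis atLeastAtMost_iff le_Suc_ex)
    show "fps_nth (Gs^k) l * fps_nth (Ws^l) n = Pnk l k / fact l * ((-1)^(n+l) * fact l * real (Stirling n l) / fact n)"
      unfolding Ws_pow l Gs_pow Pnk_gf ..
  qed simp
  finally show ?thesis
    by (simp add: sum_distrib_left power_add field_simps)
qed

end
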